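(* Let $-\omega$ be the automorphism of $\mathcal A_\theta^{alg}$ with $U_1\mapsto U_2$, $U_2\mapsto\lambda^{-1/2}U_1^{-1}U_2$, generating a group $\mathbb Z_6$, and let $H^0(\mathcal A_\theta^{alg},{}_{-\omega}\mathcal A_\theta^{alg\ast})$ be the space of formal series $\varphi=\sum\varphi_{n,m}U_1^nU_2^m$ with $((-\omega)\cdot a)\varphi=\varphi a$ for all $a\in\mathcal A_\theta^{alg}$, with $\mathbb Z_6$ acting termwise. Then $H^0(\mathcal A_\theta^{alg},{}_{-\omega}\mathcal A_\theta^{alg\ast})^{\mathbb Z_6}\cong\mathbb C$.
   Context: Let $\theta\in\mathbb R\setminus\mathbb Q$, $\lambda=e^{2\pi i\theta}$, $\lambda^s:=e^{2\pi i\theta s}$. $\mathcal A_\theta^{alg}$ is the complex algebra of finite sums $\sum a_{n,m}U_1^nU_2^m$ with $U_1,U_2$ invertible and $U_2U_1=\lambda U_1U_2$; formal series $\sum_{(n,m)\in\mathbb Z^2}\varphi_{n,m}U_1^nU_2^m$ with arbitrary coefficients form an $\mathcal A_\theta^{alg}$-bimodule via multiplication. Termwise action of an automorphism $h$: $h\cdot\sum\varphi_{n,m}U_1^nU_2^m=\sum\varphi_{n,m}\,h\cdot(U_1^nU_2^m)$. *)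

theory Defs
  imports Complex_Main
begin

(* Elements of A_theta^alg: finitely supported coefficient functions  a :: int*int => complex,
   a = sum a(n,m) U1^n U2^m.  Formal series: arbitrary  phi :: int*int => complex. *)

definition lam :: "real \<Rightarrow> real \<Rightarrow> complex" where
  "lam \<theta> s = cis (2 * pi * \<theta> * s)"   (* lambda^s = e^{2 pi i theta s} *)

definition fin_supp :: "(int \<times> int \<Rightarrow> complex) \<Rightarrow> bool" where
  "fin_supp a \<longleftrightarrow> finite {k. a k \<noteq> 0}"

(* left module action a*phi, using U1^n U2^m U1^r U2^s = lambda^{m r} U1^{n+r} U2^{m+s} *)
definition lmul :: "real \<Rightarrow> (int \<times> int \<Rightarrow> complex) \<Rightarrow> (int \<times> int \<Rightarrow> complex) \<Rightarrow> (int \<times> int \<Rightarrow> complex)" where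
  "lmul \<theta> a \<phi> = (\<lambda>(p,q). \<Sum>(n,m)\<in>{k. a k \<noteq> 0}.
       a (n,m) * lam \<theta> (of_int (m * (p - n))) * \<phi> (p - n, q - m))"

(* right module action phi*a, using U1^r U2^s U1^n U2^m = lambda^{s n} U1^{r+n} U2^{s+m} *)
definition rmul :: "real \<Rightarrow> (int \<times> int \<Rightarrow> complex) \<Rightarrow> (int \<times> int \<Rightarrow> complex) \<Rightarrow> (int \<times> int \<Rightarrow> complex)" where
  "rmul \<theta> \<phi> a = (\<lambda>(p,q). \<Sum>(n,m)\<in>{k. a k \<noteq> 0}.
       a (n,m) * lam \<theta> (of_int ((q - m) * n)) * \<phi> (p - n, q - m))"

(* The automorphism -omega: U1 |-> U2, U2 |-> lambda^{-1/2} U1^{-1} U2.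
   On monomials: (-omega)(U1^n U2^m) = U2^n (lambda^{-1/2} U1^{-1} U2)^m
                = lambda^{-m^2/2 - n m} U1^{-m} U2^{n+m}.
   Applied termwise to coefficient functions (used both for the automorphism on
   A_theta^alg and for its termwise action on formal series): the coefficient at
   (p,q) comes from the monomial (n,m) = (q+p, -p). *)
definition momega_coef :: "real \<Rightarrow> int \<Rightarrow> int \<Rightarrow> complex" where
  "momega_coef \<theta> n m = lam \<theta> (- ((real_of_int m) ^ 2) / 2 - real_of_int (n * m))"

definition momega :: "real \<Rightarrow> (int \<times> int \<Rightarrow> complex) \<Rightarrow> (int \<times> int \<Rightarrow> complex)" where
  "momega \<theta> f = (\<lambda>(p,q). momega_coef \<theta> (q + p) (- p) * f (q + p, - p))"

definition H0_twisted :: "real \<Rightarrow> (int \<times> int \<Rightarrow> complex) set" where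
  "H0_twisted \<theta> = {\<phi>. \<forall>a. fin_supp a \<longrightarrow> lmul \<theta> (momega \<theta> a) \<phi> = rmul \<theta> \<phi> a}"

definition H0_twisted_inv :: "real \<Rightarrow> (int \<times> int \<Rightarrow> complex) set" where
  "H0_twisted_inv \<theta> = {\<phi> \<in> H0_twisted \<theta>. \<forall>k::nat. (momega \<theta> ^^ k) \<phi> = \<phi>}"

end

theory Submission
  imports Defs
begin

definition psi :: "real \<Rightarrow> int \<times> int \<Rightarrow> complex" where
  "psi \<theta> = (\<lambda>(u,v). lam \<theta> (- (real_of_int u ^ 2 + real_of_int v ^ 2) / 2))"

lemma lam_mult: "lam \<theta> a * lam \<theta> b = lam \<theta> (a + b)"
  unfolding lam_def by (simp add: cis_mult algebra_simps)

lemma lam_nz: "lam \<theta> a \<noteq> 0"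
  unfolding lam_def by simp

lemma lam_cong: "a = b \<Longrightarrow> lam \<theta> a = lam \<theta> b" by simp

lemma supp_momega:
  "{k. momega \<theta> a k \<noteq> 0} = (\<lambda>(n,m). (-m, n+m)) ` {k. a k \<noteq> 0}"
proof (intro set_eqI iffI)
  fix k assume "k \<in> {k. momega \<theta> a k \<noteq> 0}"
  then obtain p q where k: "k = (p,q)" and "a (q+p, -p) \<noteq> 0"
    by (cases k) (auto simp: momega_def)
  then show "k \<in> (\<lambda>(n,m). (-m, n+m)) ` {k. a k \<noteq> 0}"
    by (auto intro!: image_eqI[where x="(q+p,-p)"])
next
  fix k assume "k \<in> (\<lambda>(n,m). (-m, n+m)) ` {k. a k \<noteq> 0}"
  then show "k \<in> {k. momega \<theta> a k \<noteq> 0}"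
    by (auto simp: momega_def momega_coef_def lam_nz)
qed

lemma lmul_momega:
  "lmul \<theta> (momega \<theta> a) \<phi> (p,q) = (\<Sum>(n,m)\<in>{k. a k \<noteq> 0}.
     momega_coef \<theta> n m * a (n,m) * lam \<theta> (of_int ((n+m)*(p+m))) * \<phi> (p+m, q-n-m))"
proof -
  have inj: "inj_on (\<lambda>p::int\<times>int. (- snd p, fst p + snd p)) A" for A
    by (auto simp: inj_on_def)
  show ?thesis
    unfolding lmul_def supp_momega
    apply (simp only: split_def prod.case)
    apply (subst sum.reindex[OF inj])
    apply (intro sum.cong refl)
    apply (simp add: split_def momega_def algebra_simps)
    done
qed

definition good :: "real \<Rightarrow> (int \<times> int \<Rightarrow> complex) \<Rightarrow> bool" where
  "good \<theta> \<phi> \<longleftrightarrow> (\<forall>n m p q. momega_coef \<theta> n m * lam \<theta> (of_int ((n+m)*(p+m))) * \<phi> (p+m, q-n-m)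
      = lam \<theta> (of_int ((q-m)*n)) * \<phi> (p-n, q-m))"

lemma good_H0: "good \<theta> \<phi> \<Longrightarrow> \<phi> \<in> H0_twisted \<theta>"
  unfolding H0_twisted_def
proof (intro CollectI allI impI ext)
  fix a :: "int \<times> int \<Rightarrow> complex" and k :: "int \<times> int"
  assume g: "good \<theta> \<phi>"
  obtain p q where k: "k = (p,q)" by (cases k)
  have "lmul \<theta> (momega \<theta> a) \<phi> (p,q) = rmul \<theta> \<phi> a (p,q)"
    unfolding lmul_momega rmul_def prod.case
  proof (rule sum.cong[OF refl])
    fix x assume "x \<in> {k. a k \<noteq> 0}"
    show "(case x of (n, m) \<Rightarrow> momega_coef \<theta> n m * a (n, m) * lam \<theta> (of_int ((n + m) * (p + m))) * \<phi> (p + m, q - n - m)) =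
         (case x of (n, m) \<Rightarrow> a (n, m) * lam \<theta> (of_int ((q - m) * n)) * \<phi> (p - n, q - m))"
    proof (cases x)
      case (Pair n m)
      have "momega_coef \<theta> n m * a (n,m) * lam \<theta> (of_int ((n+m)*(p+m))) * \<phi> (p+m, q-n-m)
         = a (n,m) * (momega_coef \<theta> n m * lam \<theta> (of_int ((n+m)*(p+m))) * \<phi> (p+m, q-n-m))"
        by (simp add: algebra_simps)
      also have "\<dots> = a (n,m) * (lam \<theta> (of_int ((q-m)*n)) * \<phi> (p-n, q-m))"
        using g unfolding good_def by metis
      finally show ?thesis by (simp add: Pair algebra_simps)
    qed
  qed
  then show "lmul \<theta> (momega \<theta> a) \<phi> k = rmul \<theta> \<phi> a k" by (simp add: k)
qed

lemma good_psi: "good \<theta> (psi \<theta>)"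
  unfolding good_def
proof (intro allI)
  fix n m p q :: int
  show "momega_coef \<theta> n m * lam \<theta> (of_int ((n+m)*(p+m))) * psi \<theta> (p+m, q-n-m)
      = lam \<theta> (of_int ((q-m)*n)) * psi \<theta> (p-n, q-m)"
    unfolding psi_def momega_coef_def prod.case lam_mult
    apply (rule lam_cong)
    apply (simp add: algebra_simps power2_eq_square divide_simps)
    done
qed

lemma good_scale: "good \<theta> \<phi> \<Longrightarrow> good \<theta> (\<lambda>k. c * \<phi> k)"
  unfolding good_def
  by (metis (no_types, lifting) mult.left_commute mult.assoc)

lemma H0_key:
  assumes "\<phi> \<in> H0_twisted \<theta>"
  shows "momega_coef \<theta> n m * lam \<theta> (of_int ((n+m)*(n+m))) * \<phi> (n+m, -n) = \<phi> (0,0)"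
proof -
  define a :: "int \<times> int \<Rightarrow> complex" where "a = (\<lambda>k. if k = (n,m) then 1 else 0)"
  have fa: "fin_supp a" unfolding fin_supp_def a_def by simp
  have S: "{k. a k \<noteq> 0} = {(n,m)}" unfolding a_def by auto
  have "lmul \<theta> (momega \<theta> a) \<phi> (n,m) = rmul \<theta> \<phi> a (n,m)"
    using assms fa unfolding H0_twisted_def by auto
  then show ?thesis
    unfolding lmul_momega rmul_def S by (simp add: a_def lam_def)
qed

lemma H0_char:
  assumes "\<phi> \<in> H0_twisted \<theta>"
  shows "\<phi> = (\<lambda>k. \<phi> (0,0) * psi \<theta> k)"
proof
  fix k :: "int \<times> int"
  obtain u v where k: "k = (u,v)" by (cases k)
  define n where "n = -v"
  define m where "m = u + v"
  have uv: "(n+m, -n) = (u,v)" by (simp add: n_def m_def)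
  define K where "K = momega_coef \<theta> n m * lam \<theta> (of_int ((n+m)*(n+m)))"
  have K0: "K \<noteq> 0" unfolding K_def momega_coef_def by (simp add: lam_nz)
  have p: "psi \<theta> \<in> H0_twisted \<theta>" by (rule good_H0[OF good_psi])
  have e1: "K * \<phi> (u,v) = \<phi> (0,0)" using H0_key[OF assms, of n m] unfolding uv K_def .
  have e2: "K * psi \<theta> (u,v) = 1" using H0_key[OF p, of n m] unfolding uv K_def by (simp add: psi_def lam_def)
  have "K * \<phi> (u,v) = K * (\<phi> (0,0) * psi \<theta> (u,v))"
    using e1 e2 by (metis mult.left_commute mult.right_neutral)
  then show "\<phi> k = \<phi> (0,0) * psi \<theta> k" using K0 k by simp
qed

lemma momega_psi: "momega \<theta> (\<lambda>k. c * psi \<theta> k) = (\<lambda>k. c * psi \<theta> k)"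
proof
  fix k :: "int \<times> int"
  obtain p q where k: "k = (p,q)" by (cases k)
  have "momega_coef \<theta> (q + p) (- p) * psi \<theta> (q+p, -p) = psi \<theta> (p,q)"
    unfolding momega_coef_def psi_def prod.case lam_mult
    by (rule lam_cong) (simp add: algebra_simps power2_eq_square divide_simps)
  then show "momega \<theta> (\<lambda>k. c * psi \<theta> k) k = c * psi \<theta> k"
    unfolding momega_def k by (simp add: algebra_simps)
qed

lemma iter_psi: "(momega \<theta> ^^ j) (\<lambda>k. c * psi \<theta> k) = (\<lambda>k. c * psi \<theta> k)"
  by (induction j) (simp_all add: momega_psi)

theorem mainTheorem9:
  fixes \<theta> :: real
  assumes "\<theta> \<notin> \<rat>"
  shows "\<exists>\<psi>. \<psi> \<noteq> (\<lambda>_. 0) \<and> H0_twisted_inv \<theta> = range (\<lambda>c::complex. \<lambda>k. c * \<psi> k)"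
proof (intro exI conjI)
  show "psi \<theta> \<noteq> (\<lambda>_. 0)"
  proof
    assume "psi \<theta> = (\<lambda>_. 0)"
    then have "psi \<theta> (0,0) = 0" by simp
    then show False by (simp add: psi_def lam_def)
  qed
  show "H0_twisted_inv \<theta> = range (\<lambda>c::complex. \<lambda>k. c * psi \<theta> k)"
  proof (intro set_eqI iffI)
    fix \<phi> assume "\<phi> \<in> H0_twisted_inv \<theta>"
    then have "\<phi> \<in> H0_twisted \<theta>" unfolding H0_twisted_inv_def by simp
    then show "\<phi> \<in> range (\<lambda>c::complex. \<lambda>k. c * psi \<theta> k)"
      using H0_char by blast
  next
    fix \<phi> assume "\<phi> \<in> range (\<lambda>c::complex. \<lambda>k. c * psi \<theta> k)"
    then obtain c where c: "\<phi> = (\<lambda>k. c * psi \<theta> k)" by blast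
    show "\<phi> \<in> H0_twisted_inv \<theta>"
      unfolding H0_twisted_inv_def c
      using good_H0[OF good_scale[OF good_psi]] iter_psi by blast
  qed
qed

end
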